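(* For each integer $d\ge 2$ define $$\alpha_d \;=\; \inf_{-\frac{1}{d-1}\le \gamma<\frac{1}{d+1}} \frac{1-\frac{F^*(d^2-1,\gamma)}{(d-1)^2}}{1-(d+1)\gamma}.$$ Then (i) $\alpha_d>\frac12\left(1-\frac1d\right)$ for every integer $d\ge 2$, and (ii) $\alpha_d-\frac12\left(1-\frac1d\right)\sim \frac{1}{2d^3}$ as $d\to\infty$, i.e. $\lim_{d\to\infty} 2d^3\left(\alpha_d-\frac12(1-\frac1d)\right)=1$.
   Context: For an integer $k\ge1$ and $\gamma\in[-1,1]$, $$F^*(k,\gamma)=\frac{2\gamma}{k}\left(\frac{\Gamma((k+1)/2)}{\Gamma(k/2)}\right)^2 {}_2F_1\!\left(\tfrac12,\tfrac12;\tfrac k2+1;\gamma^2\right),$$ where ${}_2F_1(a,b;c;z)=\sum_{n\ge0}\frac{(a)_n(b)_n}{(c)_n}\frac{z^n}{n!}$ is the Gaussian hypergeometric function and $(x)_n=\prod_{j=0}^{n-1}(x+j)$. (Equivalently, $F^*(k,\gamma)=\mathbb E\left\langle \frac{Zu}{\|Zu\|},\frac{Zv}{\|Zv\|}\right\rangle$ for unit vectors $u,v$ with $\langle u,v\rangle=\gamma$ and $Z$ a $k\times n$ matrix with i.i.d. standard Gaussian entries.) *)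

theory Defs
  imports "HOL-Analysis.Analysis"
begin

definition hyp2F1 :: "real \<Rightarrow> real \<Rightarrow> real \<Rightarrow> real \<Rightarrow> real" where
  "hyp2F1 a b c z =
     (\<Sum>n. pochhammer a n * pochhammer b n / pochhammer c n * z ^ n / fact n)"

definition Fstar :: "nat \<Rightarrow> real \<Rightarrow> real" where
  "Fstar k \<gamma> = 2 * \<gamma> / real k * (Gamma ((real k + 1) / 2) / Gamma (real k / 2))\<^sup>2
      * hyp2F1 (1/2) (1/2) (real k / 2 + 1) (\<gamma>\<^sup>2)"

definition alpha :: "nat \<Rightarrow> real" where
  "alpha d = (INF \<gamma>\<in>{-1 / (real d - 1)..<1 / (real d + 1)}.
      (1 - Fstar (d\<^sup>2 - 1) \<gamma> / (real d - 1)\<^sup>2) / (1 - (real d + 1) * \<gamma>))"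

end

theory Submission
  imports Defs "HOL-Real_Asymp.Real_Asymp"
begin

lemma poch_half_le_fact: "pochhammer (1/2::real) n \<le> fact n"
proof (induction n)
  case 0 then show ?case by simp
next
  case (Suc n)
  have p: "0 \<le> pochhammer (1/2::real) n" by (simp add: pochhammer_nonneg)
  have "pochhammer (1/2::real) (Suc n) = pochhammer (1/2) n * (1/2 + real n)"
    by (simp add: pochhammer_Suc)
  also have "\<dots> \<le> fact n * real (Suc n)"
    using Suc p by (intro mult_mono) auto
  also have "\<dots> = fact (Suc n)" by (simp add: fact_Suc)
  finally show ?case .
qed

lemma poch_mono: assumes "5/2 \<le> (c::real)" shows "pochhammer (5/2) n \<le> pochhammer c n"
proof (induction n)
  case 0 then show ?case by simp
next
  case (Suc n)
  have p: "0 \<le> pochhammer (5/2::real) n" by (simp add: pochhammer_nonneg)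
  have "pochhammer (5/2::real) (Suc n) = pochhammer (5/2) n * (5/2 + real n)"
    by (simp add: pochhammer_Suc)
  also have "\<dots> \<le> pochhammer c n * (c + real n)"
    using Suc p assms by (intro mult_mono) auto
  also have "\<dots> = pochhammer c (Suc n)" by (simp add: pochhammer_Suc)
  finally show ?case .
qed

lemma poch_ratio: "pochhammer (1/2::real) n * ((real n + 1/2) * (real n + 3/2)) = 3/4 * pochhammer (5/2) n"
proof (induction n)
  case 0 then show ?case by simp
next
  case (Suc n)
  have "pochhammer (1/2::real) (Suc n) * ((real (Suc n) + 1/2) * (real (Suc n) + 3/2))
     = (pochhammer (1/2::real) n * ((real n + 1/2) * (real n + 3/2))) * (real n + 5/2)"
    by (simp add: pochhammer_Suc field_simps)
  also have "\<dots> = 3/4 * pochhammer (5/2) n * (real n + 5/2)"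
    by (simp only: Suc.IH)
  also have "\<dots> = 3/4 * pochhammer (5/2) (Suc n)"
    by (simp add: pochhammer_Suc field_simps)
  finally show ?case .
qed

definition uu :: "nat \<Rightarrow> real" where "uu n = pochhammer (1/2) n / pochhammer (5/2) n"

lemma uu_bound: "0 \<le> uu n \<and> uu n \<le> 3/2 * inverse (real (Suc n) ^ 2) \<and> uu n \<le> 1"
proof -
  have pos: "0 < pochhammer (5/2::real) n" by (simp add: pochhammer_pos)
  have q: "0 < (real n + 1/2) * (real n + 3/2)" by simp
  define Q where "Q = (real n + 1/2) * (real n + 3/2)"
  have q: "0 < Q" unfolding Q_def by simp
  have e: "uu n = 3/4 / Q"
    using poch_ratio[of n] pos q unfolding uu_def Q_def by (simp add: field_simps)
  have s2: "(real (Suc n))^2 \<le> 2 * Q"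
  proof -
    have h: "1 \<le> real n * real n + (real n * 2 + 3/2)"
    proof -
      have "0 \<le> real n * real n" "0 \<le> real n" by simp_all
      then show ?thesis by linarith
    qed
    then show ?thesis unfolding power2_eq_square Q_def by (simp add: algebra_simps)
  qed
  have q34: "3/4 \<le> Q"
  proof -
    have "0 \<le> real n * real n" by simp
    then show ?thesis unfolding Q_def by (simp add: algebra_simps)
  qed
  have sp: "0 < (real (Suc n))^2" by simp
  have "uu n = 3/2 / (2*Q)" unfolding e by (simp add: field_simps)
  also have "\<dots> \<le> 3/2 / (real (Suc n))^2"
    by (rule divide_left_mono[OF s2]) (use sp q in simp_all)
  finally have b1: "uu n \<le> 3/2 * inverse (real (Suc n) ^ 2)" by (simp only: divide_inverse)
  have b2: "uu n \<le> 1" unfolding e using q q34 by (simp add: divide_le_eq)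
  have b0: "0 \<le> uu n" using e q by simp
  show ?thesis using b0 b1 b2 by blast
qed

lemma uu_summable: "summable uu"
proof -
  have "summable (\<lambda>n. inverse (real n ^ 2))" by (rule inverse_power_summable) simp
  then have "summable (\<lambda>n. inverse (real (Suc n) ^ 2))"
    using summable_Suc_iff[of "\<lambda>n. inverse (real n ^ 2)"] by simp
  then have "summable (\<lambda>n. 3/2 * inverse (real (Suc n) ^ 2))" by (rule summable_mult)
  then show ?thesis
    by (rule summable_comparison_test'[where N=0]) (use uu_bound in auto)
qed

definition hterm :: "real \<Rightarrow> real \<Rightarrow> nat \<Rightarrow> real" where
  "hterm c z n = pochhammer (1/2) n * pochhammer (1/2) n / pochhammer c n * z ^ n / fact n"

lemma hterm_bound:
  assumes c: "5/2 \<le> c" and z: "0 \<le> z" "z \<le> 1"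
  shows "0 \<le> hterm c z n \<and> hterm c z n \<le> uu n * z ^ n \<and> hterm c z n \<le> z ^ n"
proof -
  have p1: "0 \<le> pochhammer (1/2::real) n" by (simp add: pochhammer_nonneg)
  have p5: "0 < pochhammer (5/2::real) n" by (simp add: pochhammer_pos)
  have pc: "pochhammer (5/2) n \<le> pochhammer c n" by (rule poch_mono[OF c])
  have f: "0 < (fact n :: real)" by simp
  have zn: "0 \<le> z ^ n" "z ^ n \<le> 1" using z by (auto simp: power_le_one)
  have eq: "hterm c z n = (pochhammer (1/2) n / fact n) * (pochhammer (1/2) n / pochhammer c n) * z ^ n"
    unfolding hterm_def by (simp add: field_simps)
  have a: "0 \<le> pochhammer (1/2) n / (fact n::real)" "pochhammer (1/2) n / fact n \<le> (1::real)"
    using p1 f poch_half_le_fact[of n] by (auto simp: divide_le_eq)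
  have b: "0 \<le> pochhammer (1/2) n / pochhammer c n" "pochhammer (1/2) n / pochhammer c n \<le> uu n"
    using p1 p5 pc unfolding uu_def by (auto intro: divide_left_mono)
  have u1: "uu n \<le> 1" using uu_bound by blast
  have "uu n * z ^ n \<le> z ^ n" using mult_right_mono[OF u1 zn(1)] by simp
  moreover have "hterm c z n \<le> uu n * z ^ n"
  proof -
    have "hterm c z n \<le> 1 * uu n * z ^ n"
      unfolding eq using a b zn by (intro mult_mono) auto
    then show ?thesis by simp
  qed
  moreover have "0 \<le> hterm c z n" unfolding eq using a b zn by (intro mult_nonneg_nonneg) auto
  ultimately show ?thesis by linarith
qed

lemma hyp_bounds:
  assumes c: "5/2 \<le> c" and z: "0 \<le> z" "z \<le> 1"
  shows "1 \<le> hyp2F1 (1/2) (1/2) c z" "z < 1 \<Longrightarrow> hyp2F1 (1/2) (1/2) c z \<le> 1 / (1 - z)"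
proof -
  have hb: "\<And>n. 0 \<le> hterm c z n \<and> hterm c z n \<le> uu n * z ^ n \<and> hterm c z n \<le> z ^ n"
    using hterm_bound[OF c z] by blast
  have eq: "hyp2F1 (1/2) (1/2) c z = suminf (hterm c z)"
    unfolding hyp2F1_def hterm_def by simp
  have sm: "summable (hterm c z)"
  proof (rule summable_comparison_test'[where N=0])
    show "summable uu" by (rule uu_summable)
    fix n :: nat
    have "hterm c z n \<le> uu n * z ^ n" using hb by blast
    also have "\<dots> \<le> uu n * 1"
      using uu_bound[of n] z by (intro mult_left_mono) (auto simp: power_le_one)
    finally show "norm (hterm c z n) \<le> uu n" using hb[of n] by simp
  qed
  have h0: "hterm c z 0 = 1" unfolding hterm_def by simp
  have "suminf (hterm c z) = hterm c z 0 + (\<Sum>n. hterm c z (Suc n))"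
    using suminf_split_head[OF sm] by simp
  moreover have "0 \<le> (\<Sum>n. hterm c z (Suc n))"
    using sm hb by (intro suminf_nonneg) (auto simp: summable_Suc_iff)
  ultimately show "1 \<le> hyp2F1 (1/2) (1/2) c z" using eq h0 by simp
  assume z1: "z < 1"
  have g: "(\<lambda>n. z ^ n) sums (1 / (1 - z))" using geometric_sums[of z] z z1 by simp
  have "suminf (hterm c z) \<le> suminf (\<lambda>n. z ^ n)"
    using hb sm sums_summable[OF g] by (intro suminf_le) auto
  then show "hyp2F1 (1/2) (1/2) c z \<le> 1 / (1 - z)" using eq g sums_unique by metis
qed

lemma Gamma_lc:
  assumes a: "0 < (a::real)"
  shows "Gamma (a + 1/2) ^ 2 \<le> Gamma a * Gamma (a + 1)"
proof -
  have "(ln \<circ> Gamma) ((1 - 1/2) *\<^sub>R a + (1/2) *\<^sub>R (a + 1)) \<le> (1 - 1/2) * (ln \<circ> Gamma) a + (1/2) * (ln \<circ> Gamma) (a + 1)"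
    by (rule convex_onD[OF log_convex_Gamma_real]) (use a in auto)
  moreover have e: "(1 - 1/2) *\<^sub>R a + (1/2) *\<^sub>R (a + 1) = a + 1/2" by (simp add: field_simps)
  ultimately have l: "ln (Gamma (a + 1/2)) \<le> (ln (Gamma a) + ln (Gamma (a + 1))) / 2"
    unfolding e o_def by (simp add: algebra_simps)
  have p1: "0 < Gamma (a + 1/2)" "0 < Gamma a" "0 < Gamma (a+1)" using a by auto
  have "Gamma (a + 1/2) ^ 2 = exp (2 * ln (Gamma (a + 1/2)))"
    using p1 by (simp only: mult_2 exp_add exp_ln power2_eq_square)
  also have "\<dots> \<le> exp (ln (Gamma a) + ln (Gamma (a + 1)))" using l by simp
  also have "\<dots> = Gamma a * Gamma (a + 1)" using p1 by (simp add: exp_add)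
  finally show ?thesis .
qed

lemma Gamma_p1: "0 < (x::real) \<Longrightarrow> Gamma (x + 1) = x * Gamma x"
  by (rule Gamma_plus1) (auto dest: nonpos_Ints_nonpos)

definition cK :: "nat \<Rightarrow> real" where
  "cK k = 2 / real k * (Gamma ((real k + 1) / 2) / Gamma (real k / 2))\<^sup>2"

lemma Fstar_eq: "Fstar k g = cK k * g * hyp2F1 (1/2) (1/2) (real k / 2 + 1) (g\<^sup>2)"
  unfolding Fstar_def cK_def by simp

lemma cK_bounds:
  assumes k: "1 \<le> k"
  shows "real k / (real k + 1) \<le> cK k" "cK k \<le> 1"
proof -
  define x where "x = real k / 2"
  have x: "0 < x" using k unfolding x_def by simp
  have e1: "(real k + 1) / 2 = x + 1/2" unfolding x_def by simp
  define A where "A = Gamma (x + 1/2)"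
  define B where "B = Gamma x"
  have A: "0 < A" unfolding A_def using x by simp
  have B: "0 < B" unfolding B_def using x by simp
  have kx: "real k = 2 * x" unfolding x_def by simp
  have ck: "cK k = A^2 / (x * B^2)" unfolding cK_def e1 A_def B_def
    by (simp add: x_def[symmetric] power_divide kx)
  have u: "A^2 \<le> x * B^2"
    using Gamma_lc[OF x] Gamma_p1[OF x] unfolding A_def B_def by (simp add: power2_eq_square mult_ac)
  have "Gamma (x + 1/2 + 1/2) ^ 2 \<le> Gamma (x + 1/2) * Gamma (x + 1/2 + 1)"
    by (rule Gamma_lc) (use x in simp)
  then have "Gamma (x + 1) ^ 2 \<le> A * ((x + 1/2) * A)"
    unfolding A_def using Gamma_p1[of "x + 1/2"] x by (simp add: add.assoc)
  then have l: "x^2 * B^2 \<le> (x + 1/2) * A^2"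
    using Gamma_p1[OF x] unfolding B_def by (simp add: power2_eq_square algebra_simps)
  show "cK k \<le> 1" unfolding ck using u x B by (simp add: divide_le_eq)
  have "real k / (real k + 1) = x / (x + 1/2)" unfolding x_def by (simp add: field_simps)
  also have "\<dots> \<le> A^2 / (x * B^2)"
  proof -
    have d: "0 < x * B^2" using x B by simp
    have xh: "0 < x + 1/2" using x by simp
    have "x / (x + 1/2) * (x * B^2) = (x^2 * B^2) / (x + 1/2)" by (simp add: power2_eq_square)
    also have "\<dots> \<le> A^2" using l xh by (simp add: divide_le_eq mult.commute)
    finally show ?thesis using d by (simp add: le_divide_eq)
  qed
  finally show "real k / (real k + 1) \<le> cK k" unfolding ck .
qed

lemma frac_mono:
  fixes a b s t :: real
  assumes "0 \<le> a" "a \<le> b" "0 \<le> t" "t \<le> s"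
  shows "(1 + a * s) / (1 + b * s) \<le> (1 + a * t) / (1 + b * t)"
proof -
  have bs: "0 < 1 + b * s" "0 < 1 + b * t" using assms by (auto intro: add_pos_nonneg)
  have "0 \<le> (b - a) * (s - t)" using assms by simp
  then have "(1 + a * s) * (1 + b * t) \<le> (1 + a * t) * (1 + b * s)"
    by (simp add: algebra_simps)
  then show ?thesis using bs by (simp add: divide_simps)
qed

definition Lb :: "nat \<Rightarrow> real" where
  "Lb d = (real d - 1) / (2 * real d) + (real d + 1) / (2 * real d ^ 3 * (real d - 1))"
definition Ub :: "nat \<Rightarrow> real" where
  "Ub d = (real d - 1) / (2 * real d) + 1 / (2 * real d ^ 2 * (real d - 2))"

lemma main_bounds:
  assumes d: "2 \<le> d"
  shows "Lb d \<le> alpha d" "3 \<le> d \<Longrightarrow> alpha d \<le> Ub d"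
proof -
  define D where "D = real d"
  have D2: "2 \<le> D" using d unfolding D_def by simp
  define k where "k = d^2 - 1"
  have dd: "1 \<le> d^2" using d by (simp add: one_le_power)
  have rk: "real k = D^2 - 1" unfolding k_def D_def using dd by (simp add: of_nat_diff)
  have D4: "4 \<le> D^2" using D2 power_mono[of 2 D 2] by simp
  have k1: "1 \<le> k" using rk D4 by simp
  define G where "G = (\<lambda>\<gamma>. (1 - Fstar k \<gamma> / (D - 1)\<^sup>2) / (1 - (D + 1) * \<gamma>))"
  define S where "S = {-1 / (D - 1)..<1 / (D + 1)}"
  have al: "alpha d = (INF \<gamma>\<in>S. G \<gamma>)" unfolding alpha_def G_def S_def D_def k_def ..
  have hc: "5/2 \<le> real k / 2 + 1" using rk D4 by simp
  define cl where "cl = (D^2 - 1) / D^2"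
  have ckb: "cl \<le> cK k" "cK k \<le> 1"
    using cK_bounds[OF k1] unfolding cl_def rk by simp_all
  have cl0: "0 < cl" "cl \<le> 1" using D4 unfolding cl_def by (auto simp: divide_simps)
  have Dm: "1 \<le> (D - 1)^2" using D2 by (simp add: one_le_power)
  have low: "Lb d \<le> G \<gamma>" if g: "\<gamma> \<in> S" for \<gamma>
  proof -
    have g1: "-1 / (D - 1) \<le> \<gamma>" and g2: "\<gamma> < 1 / (D + 1)" using g unfolding S_def by auto
    define H where "H = hyp2F1 (1/2) (1/2) (real k / 2 + 1) (\<gamma>^2)"
    define K where "K = cK k * H"
    have F: "Fstar k \<gamma> = K * \<gamma>" unfolding K_def H_def Fstar_eq by (simp add: mult_ac)
    have den: "0 < 1 - (D + 1) * \<gamma>" using g2 D2 by (simp add: less_divide_eq mult.commute)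
    have dmd: "1 / (D + 1) \<le> 1 / (D - 1)" using D2 by (intro divide_left_mono) auto
    have gabs: "\<bar>\<gamma>\<bar> \<le> 1" 
    proof -
      have "1 / (D - 1) \<le> 1" using D2 by simp
      then show ?thesis using g1 g2 dmd by (auto simp: abs_le_iff)
    qed
    have z: "0 \<le> \<gamma>^2" "\<gamma>^2 \<le> 1" using gabs abs_square_le_1 by auto
    have H1: "1 \<le> H" unfolding H_def using hyp_bounds(1)[OF hc z] .
    have Kl: "cl \<le> K" unfolding K_def using H1 ckb cl0 
      by (metis dual_order.trans less_le_not_le mult.right_neutral mult_left_mono order_trans)
    show ?thesis
    proof (cases "\<gamma> \<le> 0")
      case True
      define t where "t = - \<gamma>"
      define s where "s = 1 / (D - 1)"
      have t: "0 \<le> t" "t \<le> s" using True g1 unfolding t_def s_def by auto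
      have Ge: "G \<gamma> = (1 + K * t / (D - 1)^2) / (1 + (D + 1) * t)"
        unfolding G_def F t_def by simp
      have pd: "0 < 1 + (D + 1) * t" using t D2 by (intro add_pos_nonneg) auto
      have "(1 + cl / (D-1)^2 * t) / (1 + (D + 1) * t) \<le> G \<gamma>"
        unfolding Ge
      proof (rule divide_right_mono)
        have "cl * t \<le> K * t" using Kl t by (intro mult_right_mono) auto
        then have "cl * t / (D-1)^2 \<le> K * t / (D-1)^2" by (intro divide_right_mono) auto
        then show "1 + cl / (D - 1)\<^sup>2 * t \<le> 1 + K * t / (D - 1)\<^sup>2" by simp
      qed (use pd in simp)
      moreover have "(1 + cl / (D-1)^2 * s) / (1 + (D + 1) * s) \<le> (1 + cl / (D-1)^2 * t) / (1 + (D + 1) * t)"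
      proof (rule frac_mono)
        show "0 \<le> cl / (D-1)^2" using cl0 by simp
        have "cl / (D-1)^2 \<le> cl" using cl0 Dm by (simp add: divide_le_eq mult_le_cancel_left1)
        then show "cl / (D-1)^2 \<le> D + 1" using cl0 D2 by linarith
      qed (use t in auto)
      moreover have "(1 + cl / (D-1)^2 * s) / (1 + (D + 1) * s) = Lb d"
      proof -
        have nz: "D \<noteq> 0" "D - 1 \<noteq> 0" using D2 by auto
        have e1: "1 + (D + 1) * s = 2 * D / (D - 1)" unfolding s_def using nz by (simp add: field_simps)
        have e2: "cl / (D-1)^2 * s = (D + 1) / (D^2 * (D - 1)^2)"
        proof -
          have f: "D^2 - 1 = (D - 1) * (D + 1)" by (simp add: power2_eq_square algebra_simps)
          have p: "(D - 1)^2 \<noteq> 0" "D^2 \<noteq> 0" using nz by auto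
          have "cl / (D-1)^2 * s = ((D - 1) * (D + 1)) / (D^2 * ((D - 1)^2 * (D - 1)))"
            unfolding s_def cl_def f by simp
          also have "\<dots> = (D + 1) / (D^2 * (D - 1)^2)"
            using nz p by (simp add: divide_simps)
          finally show ?thesis .
        qed
        have "(1 + cl / (D-1)^2 * s) / (1 + (D + 1) * s) = (1 + (D + 1) / (D^2 * (D - 1)^2)) * ((D - 1) / (2 * D))"
          unfolding e1 e2 using nz by simp
        also have "\<dots> = (D - 1) / (2 * D) + (D + 1) / (D^2 * (D - 1)^2) * ((D - 1) / (2 * D))"
          by (simp add: algebra_simps)
        also have "(D + 1) / (D^2 * (D - 1)^2) * ((D - 1) / (2 * D)) = (D + 1) / (2 * D^3 * (D - 1))"
        proof -
          have gen: "\<And>E. E \<noteq> 0 \<Longrightarrow> (D + 1) / (D^2 * E^2) * (E / (2 * D)) = (D + 1) / (2 * D^3 * E)"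
            using nz by (simp add: field_simps power2_eq_square power3_eq_cube)
          show ?thesis by (rule gen) (use nz in simp)
        qed
        also have "(D - 1) / (2 * D) + (D + 1) / (2 * D^3 * (D - 1)) = Lb d"
          unfolding Lb_def D_def ..
        finally show ?thesis .
      qed
      ultimately show ?thesis by linarith
    next
      case False
      then have gp: "0 < \<gamma>" by simp
      have g3: "\<gamma> \<le> 1/3"
      proof -
        have "1 / (D + 1) \<le> 1 / 3" using D2 by (intro divide_left_mono) auto
        then show ?thesis using g2 by simp
      qed
      have gg: "\<gamma>^2 \<le> 1/9" using g3 gp power_mono[of \<gamma> "1/3" 2] by (simp add: power_divide)
      have z1: "\<gamma>^2 < 1" using gg by simp
      have Hu: "H \<le> 1 / (1 - \<gamma>^2)" unfolding H_def using hyp_bounds(2)[OF hc z z1] .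
      have Ku: "K \<le> 9/8"
      proof -
        have "K \<le> 1 * H" unfolding K_def using ckb H1 by (intro mult_right_mono) auto
        also have "\<dots> \<le> 1 / (1 - \<gamma>^2)" using Hu by simp
        also have "\<dots> \<le> 1 / (1 - 1/9)" using gg z1 by (intro divide_left_mono) auto
        finally show ?thesis by simp
      qed
      have K0: "0 \<le> K" using Kl cl0 by simp
      have Kg: "K * \<gamma> \<le> 3/8" using mult_mono[OF Ku g3] K0 gp by simp
      have Kg0: "0 \<le> K * \<gamma>" using K0 gp by simp
      have "K * \<gamma> / (D - 1)^2 \<le> K * \<gamma>" using Kg0 Dm
        by (simp add: divide_le_eq mult_le_cancel_left1)
      then have N: "5/8 \<le> 1 - Fstar k \<gamma> / (D - 1)\<^sup>2" unfolding F using Kg by linarith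
      have den1: "1 - (D + 1) * \<gamma> \<le> 1" using gp D2 by simp
      have "1 - Fstar k \<gamma> / (D - 1)\<^sup>2 \<le> G \<gamma>" unfolding G_def
      proof -
        have "(1 - Fstar k \<gamma> / (D - 1)\<^sup>2) * (1 - (D + 1) * \<gamma>) \<le> (1 - Fstar k \<gamma> / (D - 1)\<^sup>2) * 1"
        proof -
          have Np: "0 \<le> 1 - Fstar k \<gamma> / (D - 1)\<^sup>2" using N by linarith
          show ?thesis by (rule mult_left_mono[OF den1 Np])
        qed
        then show "1 - Fstar k \<gamma> / (D - 1)\<^sup>2 \<le> (1 - Fstar k \<gamma> / (D - 1)\<^sup>2) / (1 - (D + 1) * \<gamma>)"
          using den by (simp add: le_divide_eq)
      qed
      moreover have "Lb d \<le> 1/2"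
      proof -
        have "D^2 * (D - 1) \<ge> 4 * (D - 1)" using D4 D2 by (intro mult_right_mono) auto
        moreover have "4 * (D - 1) = 4 * D - 4" by simp
        ultimately have a: "D + 1 \<le> D^2 * (D - 1)" using D2 by linarith
        have "(D + 1) / (2 * D^3 * (D - 1)) \<le> 1 / (2 * D)"
        proof -
          have pp: "0 < D^2 * (D - 1)" using D2 by simp
          have q: "(D + 1) / (D^2 * (D - 1)) \<le> 1" using a pp by (simp add: divide_le_eq)
          have "(D + 1) / (2 * D^3 * (D - 1)) = (D + 1) / (D^2 * (D - 1)) * (1 / (2 * D))"
            using D2 by (simp add: power2_eq_square power3_eq_cube)
          also have "\<dots> \<le> 1 * (1 / (2 * D))" using q D2 by (intro mult_right_mono) auto
          finally show ?thesis by simp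
        qed
        then show ?thesis unfolding Lb_def D_def[symmetric] using D2 by (simp add: field_simps)
      qed
      ultimately show ?thesis using N by linarith
    qed
  qed
  have Sne: "S \<noteq> {}"
  proof -
    have "-1 / (D - 1) < 0" "0 < 1 / (D + 1)" using D2 by auto
    then have "-1 / (D - 1) < 1 / (D + 1)" by linarith
    then show ?thesis unfolding S_def by simp
  qed
  show "Lb d \<le> alpha d" unfolding al by (rule cINF_greatest[OF Sne low])
  assume d3: "3 \<le> d"
  have D3: "3 \<le> D" using d3 unfolding D_def by simp
  define s where "s = 1 / (D - 1)"
  have s0: "-s \<in> S"
  proof -
    have "0 < 1 / (D - 1)" "0 < 1 / (D + 1)" using D2 by auto
    then have h: "- (1 / (D - 1)) < 1 / (D + 1)" by linarith
    show ?thesis unfolding S_def s_def using h by simp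
  qed
  have sp: "0 < s" "s \<le> 1/2" unfolding s_def using D3 by (auto simp: divide_simps)
  have s14: "s^2 \<le> 1/4"
  proof -
    have "s^2 \<le> (1/2)^2" using sp by (intro power_mono) auto
    then show ?thesis by (simp add: power_divide)
  qed
  have ss: "0 \<le> s^2" "s^2 \<le> 1" "s^2 < 1" using s14 by auto
  define H where "H = hyp2F1 (1/2) (1/2) (real k / 2 + 1) (s^2)"
  have Hu: "H \<le> 1 / (1 - s^2)" unfolding H_def using hyp_bounds(2)[OF hc ss] .
  have H1: "1 \<le> H" unfolding H_def using hyp_bounds(1)[OF hc ss(1,2)] .
  have Ge: "G (-s) = (1 + cK k * H * s / (D - 1)^2) / (1 + (D + 1) * s)"
    unfolding G_def Fstar_eq H_def by (simp add: mult_ac)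
  have pd: "0 < 1 + (D + 1) * s" using sp D2 by (intro add_pos_nonneg) auto
  have m: "cK k * H * s \<le> 1 * (1 / (1 - s^2)) * s"
    using ckb cl0 H1 Hu sp by (intro mult_right_mono mult_mono) auto
  have m2: "cK k * H * s / (D - 1)^2 \<le> 1 * (1 / (1 - s^2)) * s / (D - 1)^2"
    by (rule divide_right_mono[OF m]) simp
  have m3: "1 + cK k * H * s / (D - 1)^2 \<le> 1 + 1 / (1 - s^2) * s / (D - 1)^2"
    using m2 by simp
  have "G (-s) \<le> (1 + 1 / (1 - s^2) * s / (D - 1)^2) / (1 + (D + 1) * s)"
    unfolding Ge by (rule divide_right_mono[OF m3]) (use pd in simp)
  also have "\<dots> = Ub d"
  proof -
    have nz: "D \<noteq> 0" "D - 1 \<noteq> 0" "D - 2 \<noteq> 0" using D3 by auto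
    have e1: "1 + (D + 1) * s = 2 * D / (D - 1)" unfolding s_def using nz by (simp add: field_simps)
    have e0: "1 - s^2 = (D - 2) * D / (D - 1)^2"
    proof -
      have p: "(D - 1)^2 \<noteq> 0" using nz by simp
      have a: "1 - s^2 = ((D - 1)^2 - 1) / (D - 1)^2"
        unfolding s_def using p by (simp add: power_divide diff_divide_distrib)
      have b: "(D - 1)^2 - 1 = (D - 2) * D" by (simp add: power2_eq_square algebra_simps)
      show ?thesis unfolding a b ..
    qed
    have e3: "1 / (1 - s^2) * s / (D - 1)^2 = 1 / ((D - 2) * D * (D - 1))"
    proof -
      have gen: "\<And>A B E P. A \<noteq> 0 \<Longrightarrow> B \<noteq> 0 \<Longrightarrow> E \<noteq> 0 \<Longrightarrow> P \<noteq> 0 \<Longrightarrow>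
          1 / (A * B / P) * (1 / E) / P = 1 / (A * B * (E::real))" by (simp add: field_simps)
      show ?thesis unfolding e0 unfolding s_def by (rule gen) (use nz in auto)
    qed
    have "(1 + 1 / (1 - s^2) * s / (D - 1)^2) / (1 + (D + 1) * s)
        = (1 + 1 / ((D - 2) * D * (D - 1))) / (2 * D / (D - 1))" unfolding e1 e3 ..
    also have "\<dots> = (1 + 1 / ((D - 2) * D * (D - 1))) * ((D - 1) / (2 * D))"
      using nz by simp
    also have "\<dots> = (D - 1) / (2 * D) + 1 / ((D - 2) * D * (D - 1)) * ((D - 1) / (2 * D))"
      by (simp only: distrib_right mult_1)
    also have "\<dots> = (D - 1) / (2 * D) + 1 / (2 * D^2 * (D - 2))"
    proof -
      have gen: "\<And>A E. A \<noteq> 0 \<Longrightarrow> E \<noteq> 0 \<Longrightarrow>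
          1 / (A * D * E) * (E / (2 * D)) = 1 / (2 * D^2 * A)" using nz by (simp add: field_simps power2_eq_square)
      have g: "1 / ((D - 2) * D * (D - 1)) * ((D - 1) / (2 * D)) = 1 / (2 * D^2 * (D - 2))"
        by (rule gen) (use nz in auto)
      show ?thesis by (simp only: g)
    qed
    also have "\<dots> = Ub d" unfolding Ub_def D_def ..
    finally show ?thesis .
  qed
  finally have "G (-s) \<le> Ub d" .
  moreover have "alpha d \<le> G (-s)" unfolding al
    by (rule cINF_lower[OF bdd_belowI2[OF low] s0])
  ultimately show "alpha d \<le> Ub d" by linarith
qed

lemma Lb_lim: "(\<lambda>d::nat. 2 * (real d)^3 * (Lb d - (1/2) * (1 - 1 / real d))) \<longlonglongrightarrow> 1"
  unfolding Lb_def by real_asymp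

lemma Ub_lim: "(\<lambda>d::nat. 2 * (real d)^3 * (Ub d - (1/2) * (1 - 1 / real d))) \<longlonglongrightarrow> 1"
  unfolding Ub_def by real_asymp

lemma Lb_gt: assumes "2 \<le> d" shows "(1/2) * (1 - 1 / real d) < Lb d"
proof -
  have D: "2 \<le> real d" using assms by simp
  have "(1/2) * (1 - 1 / real d) = (real d - 1) / (2 * real d)" using D by (simp add: field_simps)
  moreover have "0 < (real d + 1) / (2 * real d ^ 3 * (real d - 1))" using D by simp
  ultimately show ?thesis unfolding Lb_def by linarith
qed

theorem theorem1:
  shows "(\<forall>d::nat. d \<ge> 2 \<longrightarrow> alpha d > (1/2) * (1 - 1 / real d)) \<and>
         ((\<lambda>d::nat. 2 * (real d)^3 * (alpha d - (1/2) * (1 - 1 / real d))) \<longlonglongrightarrow> 1)"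
proof
  show "\<forall>d::nat. d \<ge> 2 \<longrightarrow> alpha d > (1/2) * (1 - 1 / real d)"
    using Lb_gt main_bounds(1) by (meson less_le_trans)
  show "(\<lambda>d::nat. 2 * (real d)^3 * (alpha d - (1/2) * (1 - 1 / real d))) \<longlonglongrightarrow> 1"
  proof (rule tendsto_sandwich[OF _ _ Lb_lim Ub_lim])
    show "\<forall>\<^sub>F d in sequentially. 2 * (real d)^3 * (Lb d - (1/2) * (1 - 1 / real d))
        \<le> 2 * (real d)^3 * (alpha d - (1/2) * (1 - 1 / real d))"
      using eventually_ge_at_top[of 2]
      by eventually_elim (use main_bounds(1) in \<open>intro mult_left_mono, auto\<close>)
    show "\<forall>\<^sub>F d in sequentially. 2 * (real d)^3 * (alpha d - (1/2) * (1 - 1 / real d))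
        \<le> 2 * (real d)^3 * (Ub d - (1/2) * (1 - 1 / real d))"
      using eventually_ge_at_top[of 3]
      by eventually_elim (use main_bounds(2) in \<open>intro mult_left_mono, auto\<close>)
  qed
qed

end
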